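(* Let $0\le\alpha<1$. The radius of starlikeness of order $\alpha$ of the class of analytic functions $f(z)=z+\sum_{n\ge2}a_nz^n$ on $\mathbb{D}$ with $a_2=0$ and $|a_n|\le n$ for all $n\ge3$ is the real root in $(0,1)$ of the equation \[2\big(1-\alpha+(2-\alpha)r\big)(1-r)^3=1-\alpha+(1+\alpha)r.\] In particular, the radius of starlikeness of this class is the root $r_0\approx0.253571$ of $2(1+2r)(1-r)^3=1+r$, and the radius of starlikeness of order $1/2$, which equals the radius of parabolic starlikeness of the class, is $1-\sqrt[3]{1/2}\approx0.206299$. These results are sharp.
   Context: $\mathbb{D}=\{z\in\mathbb{C}:|z|<1\}$. For a class $\mathcal{F}$ of analytic functions on $\mathbb{D}$ normalized by $f(0)=0$, $f'(0)=1$, and $0\le\alpha<1$, the radius of starlikeness of order $\alpha$ of $\mathcal{F}$ is the supremum of $r\in(0,1]$ such that every $f\in\mathcal{F}$ satisfies $f(z)\ne0$ for $0<|z|<r$ and $\operatorname{Re}\big(zf'(z)/f(z)\big)>\alpha$ for $|z|<r$ (the quotient being $1$ at $z=0$); the radius of starlikeness means the case $\alpha=0$. The radius of parabolic starlikeness of $\mathcal{F}$ is the supremum of $r\in(0,1]$ such that every $f\in\mathcal{F}$ satisfies $\operatorname{Re}\big(zf'(z)/f(z)\big)>\left|zf'(z)/f(z)-1\right|$ for $|z|<r$. *)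

theory Defs
  imports "HOL-Analysis.Analysis"
begin

text \<open>The class of the paper: analytic f(z) = z + sum_{n>=2} a_n z^n on the unit disk
  with a_2 = 0 and |a_n| <= n for n >= 3.  Functions are identified by their values
  on the unit disk, where they are given by their (convergent) power series.\<close>
definition classF :: "(complex \<Rightarrow> complex) set" where
  "classF = {f. \<exists>a :: nat \<Rightarrow> complex.
      a 0 = 0 \<and> a 1 = 1 \<and> a 2 = 0 \<and> (\<forall>n\<ge>3. norm (a n) \<le> real n) \<and>
      (\<forall>z\<in>ball 0 1. (\<lambda>n. a n * z ^ n) sums f z)}"

definition sq :: "(complex \<Rightarrow> complex) \<Rightarrow> complex \<Rightarrow> complex" where
  "sq f z = (if z = 0 then 1 else z * deriv f z / f z)"

definition starlike_order_upto :: "real \<Rightarrow> (complex \<Rightarrow> complex) \<Rightarrow> real \<Rightarrow> bool" where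
  "starlike_order_upto \<alpha> f r \<longleftrightarrow>
     (\<forall>z. 0 < norm z \<and> norm z < r \<longrightarrow> f z \<noteq> 0) \<and>
     (\<forall>z. norm z < r \<longrightarrow> Re (sq f z) > \<alpha>)"

definition radius_starlike_order :: "real \<Rightarrow> (complex \<Rightarrow> complex) set \<Rightarrow> real" where
  "radius_starlike_order \<alpha> F =
     Sup {r. 0 < r \<and> r \<le> 1 \<and> (\<forall>f\<in>F. starlike_order_upto \<alpha> f r)}"

definition radius_starlike :: "(complex \<Rightarrow> complex) set \<Rightarrow> real" where
  "radius_starlike F = radius_starlike_order 0 F"

definition radius_parabolic :: "(complex \<Rightarrow> complex) set \<Rightarrow> real" where
  "radius_parabolic F =
     Sup {r. 0 < r \<and> r \<le> 1 \<and>
          (\<forall>f\<in>F. \<forall>z. norm z < r \<longrightarrow> Re (sq f z) > norm (sq f z - 1))}"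

end

theory Submission
  imports Defs
begin

definition cP :: "nat \<Rightarrow> real" where "cP n = (if 3 \<le> n then real n else 0)"
definition cQ :: "nat \<Rightarrow> real" where "cQ n = (if 3 \<le> n then real n ^ 2 else 0)"
definition Pf :: "real \<Rightarrow> real" where "Pf x = x/(1-x)^2 - x - 2*x^2"
definition Qf :: "real \<Rightarrow> real" where "Qf x = x*(1+x)/(1-x)^3 - x - 4*x^2"
definition hp :: "real \<Rightarrow> real \<Rightarrow> real" where
  "hp \<alpha> r = 2 * (1 - \<alpha> + (2 - \<alpha>) * r) * (1 - r) ^ 3 - (1 - \<alpha> + (1 + \<alpha>) * r)"

lemma summ_n2:
  fixes x :: real assumes "0 \<le> x" "x < 1"
  shows "summable (\<lambda>n. real n ^ 2 * x^n)"
proof -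
  have g: "\<And>y::real. norm y < 1 \<Longrightarrow> summable (\<lambda>n. (\<lambda>_. 1) n * y^n)"
    by (simp add: summable_geometric)
  have d1: "\<And>y::real. norm y < 1 \<Longrightarrow> summable (\<lambda>n. diffs (\<lambda>_. 1) n * y^n)"
    by (rule termdiff_converges[where K=1]) (auto intro: g)
  have d2: "summable (\<lambda>n. diffs (diffs (\<lambda>_. 1::real)) n * x^n)"
    by (rule termdiff_converges[where K=1]) (use assms d1 in auto)
  show ?thesis
  proof (rule summable_comparison_test'[OF d2])
    fix n :: nat assume "0 \<le> n"
    have "real n ^ 2 \<le> real (Suc n) * real (Suc (Suc n))"
      by (simp add: power2_eq_square mult_mono)
    then show "norm (real n ^ 2 * x ^ n) \<le> diffs (diffs (\<lambda>_. 1)) n * x ^ n"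
      using assms by (simp add: diffs_def abs_mult mult_right_mono)
  qed
qed

lemma summ_n:
  fixes x :: real assumes "0 \<le> x" "x < 1"
  shows "summable (\<lambda>n. real n * x^n)"
proof (rule summable_comparison_test'[OF summ_n2[OF assms]])
  fix n :: nat assume "0 \<le> n"
  have "real n \<le> real n ^ 2" by (cases n) (auto simp: power2_eq_square)
  then show "norm (real n * x ^ n) \<le> real n ^ 2 * x ^ n"
    using assms by (simp add: abs_mult mult_right_mono)
qed

lemma sums_n:
  fixes x :: real assumes "0 \<le> x" "x < 1"
  shows "(\<lambda>n. real n * x^n) sums (x/(1-x)^2)"
proof -
  define S where "S = (\<Sum>n. real n * x^n)"
  have s: "(\<lambda>n. real n * x^n) sums S" using summ_n[OF assms] S_def by (simp add: summable_sums)
  then have "(\<lambda>n. real (Suc n) * x^(Suc n)) sums S"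
    using sums_Suc_iff[of "\<lambda>n. real n * x^n" S] by simp
  moreover have "(\<lambda>n. x * (real n * x^n) + x * x^n) sums (x * S + x * (1/(1-x)))"
    by (intro sums_add sums_mult s geometric_sums) (use assms in auto)
  moreover have "(\<lambda>n. real (Suc n) * x^(Suc n)) = (\<lambda>n. x * (real n * x^n) + x * x^n)"
    by (auto simp: fun_eq_iff algebra_simps)
  ultimately have "S = x * S + x * (1/(1-x))" using sums_unique2 by metis
  then have "S * (1-x) = x / (1-x)" by (simp add: algebra_simps)
  then have "S = (x / (1-x)) / (1-x)" using assms by (simp add: eq_divide_eq)
  then have "S = x/(1-x)^2" by (simp add: power2_eq_square)
  then show ?thesis using s by simp
qed

lemma l1: "(\<lambda>n. real (Suc n) ^ 2 * x^(Suc n)) = (\<lambda>n. x * (real n ^ 2 * x^n) + (2*x) * (real n * x^n) + x * x^n)"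
proof
  fix n
  have "real (Suc n) = real n + 1" by simp
  then show "real (Suc n) ^ 2 * x^(Suc n) = x * (real n ^ 2 * x^n) + (2*x) * (real n * x^n) + x * x^n"
    by (simp only: power_Suc) (simp add: algebra_simps power2_eq_square)
qed

lemma l2: fixes x :: real assumes "x < 1"
  shows "((2*x) * (x/(1-x)^2) + x * (1/(1-x))) / (1-x) = x*(1+x)/(1-x)^3"
proof -
  have d: "1 - x \<noteq> 0" using assms by simp
  have "((2*x) * (x/(1-x)^2) + x * (1/(1-x))) / (1-x) = (2*x*x + x*(1-x)) / (1-x)^3"
    using d by (simp add: divide_simps power2_eq_square power3_eq_cube)
  also have "2*x*x + x*(1-x) = x*(1+x)" by (simp add: algebra_simps)
  finally show ?thesis .
qed

lemma sums_n2:
  fixes x :: real assumes "0 \<le> x" "x < 1"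
  shows "(\<lambda>n. real n ^ 2 * x^n) sums (x*(1+x)/(1-x)^3)"
proof -
  define T where "T = (\<Sum>n. real n ^ 2 * x^n)"
  have s: "(\<lambda>n. real n ^ 2 * x^n) sums T" using summ_n2[OF assms] T_def by (simp add: summable_sums)
  have A: "(\<lambda>n. real (Suc n) ^ 2 * x^(Suc n)) sums T"
    using sums_Suc_iff[of "\<lambda>n. real n ^ 2 * x^n" T] s by simp
  have g: "(\<lambda>n. x^n) sums (1/(1-x))" using assms by (intro geometric_sums) auto
  have B: "(\<lambda>n. x * (real n ^ 2 * x^n) + (2*x) * (real n * x^n) + x * x^n)
      sums (x * T + (2*x) * (x/(1-x)^2) + x * (1/(1-x)))"
    by (intro sums_add sums_mult s g sums_n assms)
  have B': "(\<lambda>n. real (Suc n) ^ 2 * x^(Suc n)) sums (x * T + (2*x) * (x/(1-x)^2) + x * (1/(1-x)))"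
    using B by (simp only: l1)
  have "T = x * T + (2*x) * (x/(1-x)^2) + x * (1/(1-x))" using sums_unique2[OF A B'] .
  then have "T * (1-x) = (2*x) * (x/(1-x)^2) + x * (1/(1-x))" by (simp add: algebra_simps)
  then have "T = ((2*x) * (x/(1-x)^2) + x * (1/(1-x))) / (1-x)" using assms by (simp add: eq_divide_eq)
  also have "\<dots> = x*(1+x)/(1-x)^3" using assms(2) by (rule l2)
  finally show ?thesis using s by simp
qed

lemma sums_cP:
  fixes x :: real assumes "0 \<le> x" "x < 1"
  shows "(\<lambda>n. cP n * x^n) sums Pf x"
proof -
  have "(\<lambda>n. real n * x^n - (if n \<in> {..<3} then real n * x^n else 0)) sums (x/(1-x)^2 - (\<Sum>n\<in>{..<3}. real n * x^n))"
    by (intro sums_diff sums_n assms sums_If_finite_set) auto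
  moreover have "(\<lambda>n. real n * x^n - (if n \<in> {..<3} then real n * x^n else 0)) = (\<lambda>n. cP n * x^n)"
    by (auto simp: fun_eq_iff cP_def)
  moreover have "(\<Sum>n\<in>{..<3}. real n * x^n) = x + 2*x^2" by (simp add: eval_nat_numeral)
  ultimately have A: "(\<lambda>n. cP n * x^n) sums (x/(1-x)^2 - (x + 2*x^2))" by simp
  have eq: "x/(1-x)^2 - (x + 2*x^2) = Pf x" by (simp add: Pf_def)
  show ?thesis using A[unfolded eq] .
qed

lemma sums_cQ:
  fixes x :: real assumes "0 \<le> x" "x < 1"
  shows "(\<lambda>n. cQ n * x^n) sums Qf x"
proof -
  have "(\<lambda>n. real n ^ 2 * x^n - (if n \<in> {..<3} then real n ^ 2 * x^n else 0)) sums (x*(1+x)/(1-x)^3 - (\<Sum>n\<in>{..<3}. real n ^ 2 * x^n))"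
    by (intro sums_diff sums_n2 assms sums_If_finite_set) auto
  moreover have "(\<lambda>n. real n ^ 2 * x^n - (if n \<in> {..<3} then real n ^ 2 * x^n else 0)) = (\<lambda>n. cQ n * x^n)"
    by (auto simp: fun_eq_iff cQ_def)
  moreover have "(\<Sum>n\<in>{..<3}. real n ^ 2 * x^n) = x + 4*x^2" by (simp add: eval_nat_numeral)
  ultimately have A: "(\<lambda>n. cQ n * x^n) sums (x*(1+x)/(1-x)^3 - (x + 4*x^2))" by simp
  have eq: "x*(1+x)/(1-x)^3 - (x + 4*x^2) = Qf x" by (simp add: Qf_def)
  show ?thesis using A[unfolded eq] .
qed

lemma hp_identity:
  fixes r a :: real assumes "r < 1"
  shows "r * hp a r = - ((1-r)^3 * (Qf r - a * Pf r - (1-a)*r))"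
proof -
  define d where "d = 1 - r"
  have d: "d \<noteq> 0" "r = 1 - d" using assms by (auto simp: d_def)
  have "(1-r)^3 * (Qf r - a * Pf r - (1-a)*r) = r*(1+r) - (r + 4*r^2)*d^3 - a*(r*d - (r+2*r^2)*d^3) - (1-a)*r*d^3"
    using d(1) unfolding Qf_def Pf_def d_def[symmetric]
    by (simp add: field_simps power2_eq_square power3_eq_cube)
  also have "\<dots> = - (r * hp a r)"
    unfolding hp_def d(2) by (simp add: algebra_simps power2_eq_square power3_eq_cube)
  finally show ?thesis by simp
qed

lemma hp_deriv:
  "DERIV (hp a) r :> ((1-r)^2 * (-2 + 4*a - 8*(2-a)*r) - (1+a))"
proof -
  have "DERIV (hp a) r :> (2 * (2 - a) * (1 - r) ^ 3 + 2 * (1 - a + (2 - a) * r) * (3 * (1 - r) ^ 2 * (- 1)) - (1 + a))"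
    unfolding hp_def[abs_def]
    by (auto intro!: derivative_eq_intros)
  moreover have "2 * (2 - a) * (1 - r) ^ 3 + 2 * (1 - a + (2 - a) * r) * (3 * (1 - r) ^ 2 * (- 1)) - (1 + a)
     = (1-r)^2 * (-2 + 4*a - 8*(2-a)*r) - (1+a)"
    by (simp add: algebra_simps power2_eq_square power3_eq_cube)
  ultimately show ?thesis by simp
qed

lemma aux_neg:
  fixes p B a :: real assumes "0 \<le> p" "p \<le> 1" "B \<le> -2 + 4*a" "a < 1" "0 \<le> a"
  shows "p*B - (1+a) < 0"
proof (cases "B \<le> 0")
  case True
  then have "p*B \<le> 0" using assms by (simp add: mult_nonneg_nonpos)
  then show ?thesis using assms by linarith
next
  case False
  then have "p*B \<le> B" using assms by (intro mult_left_le_one_le) auto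
  then show ?thesis using assms by linarith
qed

lemma hp_deriv_neg:
  fixes a r :: real assumes "0 \<le> a" "a < 1" "0 \<le> r" "r \<le> 1"
  shows "(1-r)^2 * (-2 + 4*a - 8*(2-a)*r) - (1+a) < 0"
proof (rule aux_neg)
  show "(1-r)^2 \<le> 1" using assms by (simp add: power2_eq_square mult_le_one)
  show "-2 + 4*a - 8*(2-a)*r \<le> -2 + 4*a" using assms by simp
qed (use assms in auto)

lemma hp_dec:
  fixes a x y :: real assumes "0 \<le> a" "a < 1" "0 \<le> x" "x < y" "y \<le> 1"
  shows "hp a y < hp a x"
  by (rule DERIV_neg_imp_decreasing[OF \<open>x < y\<close>])
     (use assms in \<open>auto intro!: exI hp_deriv hp_deriv_neg\<close>)

lemma hp_cont: "continuous_on S (hp a)"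
  unfolding hp_def[abs_def] by (intro continuous_intros)

lemma norm_sums_le:
  fixes b :: "nat \<Rightarrow> 'a::banach"
  assumes "b sums B" "d sums D" "\<And>n. norm (b n) \<le> d n"
  shows "norm B \<le> D"
proof -
  have sd: "summable d" using assms(2) by (rule sums_summable)
  have sn: "summable (\<lambda>n. norm (b n))"
    by (rule summable_comparison_test'[OF sd]) (use assms(3) in auto)
  have "norm B = norm (suminf b)" using assms(1) by (simp add: sums_unique[symmetric])
  also have "\<dots> \<le> (\<Sum>n. norm (b n))" by (rule summable_norm[OF sn])
  also have "\<dots> \<le> suminf d" by (rule suminf_le[OF assms(3) sn sd])
  also have "\<dots> = D" using assms(2) by (simp add: sums_unique[symmetric])
  finally show ?thesis .
qed

lemma summable_coeff:
  fixes a :: "nat \<Rightarrow> complex"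
  assumes bd: "\<forall>n\<ge>3. norm (a n) \<le> real n" and z: "norm z < 1"
  shows "summable (\<lambda>n. a n * z^n)"
proof (rule summable_comparison_test'[OF summ_n[of "norm z"], where N=3])
  fix n :: nat assume "3 \<le> n"
  then show "norm (a n * z ^ n) \<le> real n * norm z ^ n"
    using bd by (simp add: norm_mult norm_power mult_right_mono)
qed (use z in auto)

lemma series_facts:
  fixes a :: "nat \<Rightarrow> complex" and f :: "complex \<Rightarrow> complex"
  assumes a0: "a 0 = 0" "a 1 = 1" "a 2 = 0"
    and bd: "\<forall>n\<ge>3. norm (a n) \<le> real n"
    and S: "\<forall>w\<in>ball 0 1. (\<lambda>n. a n * w ^ n) sums f w"
    and z: "norm z < 1" "z \<noteq> 0"
  shows "(\<lambda>n. if 3 \<le> n then a n * z^n else 0) sums (f z - z)"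
    and "(\<lambda>n. if 3 \<le> n then of_nat n * a n * z^n else 0) sums (z * deriv f z - z)"
proof -
  have Sz: "(\<lambda>n. a n * z ^ n) sums f z" using S z by auto
  have fin1: "(\<lambda>n. if n \<in> {..<3} then a n * z^n else 0) sums (\<Sum>n\<in>{..<3}. a n * z^n)"
    by (rule sums_If_finite_set) auto
  have e1: "(\<Sum>n\<in>{..<3}. a n * z^n) = z" using a0 by (simp add: eval_nat_numeral)
  have "(\<lambda>n. a n * z ^ n - (if n \<in> {..<3} then a n * z^n else 0)) sums (f z - z)"
    using sums_diff[OF Sz fin1] e1 by simp
  moreover have "(\<lambda>n. a n * z ^ n - (if n \<in> {..<3} then a n * z^n else 0)) = (\<lambda>n. if 3 \<le> n then a n * z^n else 0)"
    by (auto simp: fun_eq_iff)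
  ultimately show "(\<lambda>n. if 3 \<le> n then a n * z^n else 0) sums (f z - z)" by simp
  define K :: complex where "K = of_real ((1 + norm z)/2)"
  have "norm K = \<bar>(1 + norm z)/2\<bar>" unfolding K_def by (rule norm_of_real)
  then have nK: "norm K = (1 + norm z)/2" by simp
  have Kb: "K \<in> ball 0 1" using nK z by simp
  have smK: "summable (\<lambda>n. a n * K ^ n)" using S Kb sums_summable by blast
  have zK: "norm z < norm K" using nK z by simp
  define D where "D = (\<Sum>n. diffs a n * z^n)"
  have der: "DERIV (\<lambda>w. \<Sum>n. a n * w^n) z :> D" unfolding D_def by (rule termdiffs_strong[OF smK zK])
  have der2: "DERIV f z :> D"
  proof (rule has_field_derivative_transform_within_open[OF der, of "ball 0 1"])
    show "z \<in> ball 0 1" using z by simp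
    fix w :: complex assume "w \<in> ball 0 1"
    then show "(\<Sum>n. a n * w^n) = f w" using S by (simp add: sums_unique[symmetric])
  qed simp
  have dD: "deriv f z = D" using der2 by (rule DERIV_imp_deriv)
  have sd: "summable (\<lambda>n. diffs a n * z^n)"
  proof (rule termdiff_converges[where K=1])
    fix w :: complex assume "norm w < 1"
    then have "w \<in> ball 0 1" by simp
    then show "summable (\<lambda>n. a n * w ^ n)" using S sums_summable by blast
  qed (use z in simp)
  have m: "(\<lambda>n. z * (diffs a n * z^n)) sums (z * D)" unfolding D_def
    by (intro sums_mult summable_sums sd)
  define g where "g n = of_nat n * a n * z^n" for n
  have "(\<lambda>n. z * (diffs a n * z^n)) = (\<lambda>n. g (Suc n))"
    by (auto simp: fun_eq_iff g_def diffs_def algebra_simps)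
  then have "(\<lambda>n. g (Suc n)) sums (z * D)" using m by simp
  then have gs: "g sums (z * D)" using sums_Suc_iff[of g "z*D"] by (simp add: g_def)
  have fin2: "(\<lambda>n. if n \<in> {..<3} then g n else 0) sums (\<Sum>n\<in>{..<3}. g n)"
    by (rule sums_If_finite_set) auto
  have e2: "(\<Sum>n\<in>{..<3}. g n) = z" using a0 by (simp add: eval_nat_numeral g_def)
  have "(\<lambda>n. g n - (if n \<in> {..<3} then g n else 0)) sums (z * D - z)"
    using sums_diff[OF gs fin2] e2 by simp
  moreover have "(\<lambda>n. g n - (if n \<in> {..<3} then g n else 0)) = (\<lambda>n. if 3 \<le> n then of_nat n * a n * z^n else 0)"
    by (auto simp: fun_eq_iff g_def)
  ultimately show "(\<lambda>n. if 3 \<le> n then of_nat n * a n * z^n else 0) sums (z * deriv f z - z)"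
    by (simp add: dD)
qed

lemma class_bounds:
  fixes a :: "nat \<Rightarrow> complex" and f :: "complex \<Rightarrow> complex"
  assumes a0: "a 0 = 0" "a 1 = 1" "a 2 = 0"
    and bd: "\<forall>n\<ge>3. norm (a n) \<le> real n"
    and S: "\<forall>w\<in>ball 0 1. (\<lambda>n. a n * w ^ n) sums f w"
    and z: "norm z < 1" "z \<noteq> 0"
  shows "norm (f z - z) \<le> Pf (norm z)"
    and "norm (z * deriv f z - f z) \<le> Qf (norm z) - Pf (norm z)"
proof -
  note sf = series_facts[OF a0 bd S z]
  let ?r = "norm z"
  have r: "0 \<le> ?r" "?r < 1" using z by auto
  show "norm (f z - z) \<le> Pf ?r"
  proof (rule norm_sums_le[OF sf(1) sums_cP[OF r]])
    fix n show "norm (if 3 \<le> n then a n * z ^ n else 0) \<le> cP n * ?r ^ n"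
      using bd by (auto simp: cP_def norm_mult norm_power mult_right_mono)
  qed
  have ds: "(\<lambda>n. (if 3 \<le> n then of_nat n * a n * z^n else 0) - (if 3 \<le> n then a n * z^n else 0))
     sums ((z * deriv f z - z) - (f z - z))" by (rule sums_diff[OF sf(2) sf(1)])
  have "norm ((z * deriv f z - z) - (f z - z)) \<le> Qf ?r - Pf ?r"
  proof (rule norm_sums_le[OF ds sums_diff[OF sums_cQ[OF r] sums_cP[OF r]]])
    fix n
    show "norm ((if 3 \<le> n then of_nat n * a n * z^n else 0) - (if 3 \<le> n then a n * z^n else 0))
       \<le> cQ n * ?r ^ n - cP n * ?r ^ n"
    proof (cases "3 \<le> n")
      case True
      have e: "of_nat n * a n * z^n - a n * z^n = of_nat (n - 1) * (a n * z^n)"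
        using True by (simp add: of_nat_diff algebra_simps)
      have "norm (of_nat (n - 1) * (a n * z^n)) = real (n-1) * (norm (a n) * ?r ^ n)"
        by (simp add: norm_mult norm_power)
      also have "\<dots> \<le> real (n-1) * (real n * ?r ^ n)"
        using bd True by (intro mult_left_mono mult_right_mono) auto
      also have "\<dots> = cQ n * ?r ^ n - cP n * ?r ^ n"
        using True by (simp add: cQ_def cP_def of_nat_diff algebra_simps power2_eq_square)
      finally show ?thesis using True e by simp
    qed (simp add: cQ_def cP_def)
  qed
  then show "norm (z * deriv f z - f z) \<le> Qf ?r - Pf ?r" by simp
qed

lemma Re_gt_of_dist:
  fixes w :: complex assumes "norm (w - 1) < 1 - al" shows "Re w > al"
proof -
  have "\<bar>Re (w - 1)\<bar> \<le> norm (w - 1)" by (rule abs_Re_le_cmod)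
  then have "Re w - 1 \<ge> - norm (w - 1)" by simp
  then show ?thesis using assms by linarith
qed

lemma star_pos:
  assumes f: "f \<in> classF" and al: "0 \<le> al" "al < 1" and z: "norm z < 1" "z \<noteq> 0"
    and h: "hp al (norm z) > 0"
  shows "f z \<noteq> 0" "norm (sq f z - 1) < 1 - al"
proof -
  obtain a where a0: "a 0 = 0" "a 1 = 1" "a 2 = 0" and bd: "\<forall>n\<ge>3. norm (a n) \<le> real n"
    and S: "\<forall>w\<in>ball 0 1. (\<lambda>n. a n * w ^ n) sums f w"
    using f unfolding classF_def by blast
  define \<rho> where "\<rho> = norm z"
  have r: "0 < \<rho>" "\<rho> < 1" using z by (auto simp: \<rho>_def)
  note B = class_bounds[OF a0 bd S z, folded \<rho>_def]
  define P where "P = Pf \<rho>"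
  define Q where "Q = Qf \<rho>"
  define G where "G = Q - al * P - (1-al)*\<rho>"
  have id: "\<rho> * hp al \<rho> = - ((1-\<rho>)^3 * G)" unfolding G_def P_def Q_def by (rule hp_identity) (use r in simp)
  have "\<rho> * hp al \<rho> > 0" using r h by (simp add: \<rho>_def)
  then have "(1-\<rho>)^3 * G < 0" using id by linarith
  moreover have "(1-\<rho>)^3 > 0" using r by simp
  ultimately have G: "G < 0" by (simp add: mult_less_0_iff)
  have B1: "norm (f z - z) \<le> P" using B(1) by (simp add: P_def)
  have B2: "norm (z * deriv f z - f z) \<le> Q - P" using B(2) by (simp add: P_def Q_def)
  have QP: "0 \<le> Q - P" using B2 norm_ge_zero order_trans by blast
  have e: "(1-al)*(\<rho>-P) - (Q - P) = - G" unfolding G_def by (simp add: algebra_simps)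
  have lt: "Q - P < (1-al)*(\<rho>-P)" using e G by linarith
  have "0 < (1-al)*(\<rho>-P)" using lt QP by linarith
  then have rP: "0 < \<rho> - P" using al by (simp add: zero_less_mult_iff)
  have "norm z = norm (f z - (f z - z))" by simp
  also have "\<dots> \<le> norm (f z) + norm (f z - z)" by (rule norm_triangle_ineq4)
  finally have fz: "\<rho> - P \<le> norm (f z)" using B1 by (simp add: \<rho>_def)
  then show fz0: "f z \<noteq> 0" using rP by auto
  have "sq f z - 1 = (z * deriv f z - f z) / f z" using z fz0 by (simp add: sq_def field_simps)
  then have "norm (sq f z - 1) = norm (z * deriv f z - f z) / norm (f z)" by (simp add: norm_divide)
  also have "\<dots> \<le> (Q - P) / (\<rho> - P)"
    by (rule frac_le[OF QP B2 rP fz])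
  also have "\<dots> < 1 - al" using lt rP by (simp add: pos_divide_less_eq mult.commute)
  finally show "norm (sq f z - 1) < 1 - al" .
qed

definition a0 :: "nat \<Rightarrow> complex" where "a0 n = (if n = 1 then 1 else - of_real (cP n))"
definition f0 :: "complex \<Rightarrow> complex" where "f0 z = (\<Sum>n. a0 n * z ^ n)"

lemma a0_props: "a0 0 = 0" "a0 1 = 1" "a0 2 = 0" "\<forall>n\<ge>3. norm (a0 n) \<le> real n"
  by (auto simp: a0_def cP_def)

lemma f0_sums: "\<forall>w\<in>ball 0 1. (\<lambda>n. a0 n * w ^ n) sums f0 w"
proof
  fix w :: complex assume "w \<in> ball 0 1"
  then have "summable (\<lambda>n. a0 n * w ^ n)" using a0_props(4) by (intro summable_coeff) auto
  then show "(\<lambda>n. a0 n * w ^ n) sums f0 w" unfolding f0_def by (rule summable_sums)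
qed

lemma f0_class: "f0 \<in> classF"
  unfolding classF_def using a0_props f0_sums by blast

lemma f0_vals:
  fixes x :: real assumes x: "0 < x" "x < 1"
  shows "f0 (of_real x) = of_real (x - Pf x)" "of_real x * deriv f0 (of_real x) = of_real (x - Qf x)"
proof -
  have z: "norm (complex_of_real x) < 1" "complex_of_real x \<noteq> 0" using x by auto
  note sf = series_facts[OF a0_props(1-3) a0_props(4) f0_sums z]
  have r: "0 \<le> x" "x < 1" using x by auto
  have t1: "(\<lambda>n. if 3 \<le> n then a0 n * of_real x ^ n else 0) = (\<lambda>n. of_real (- (cP n * x ^ n)))"
    by (auto simp: fun_eq_iff a0_def cP_def)
  have "(\<lambda>n. of_real (- (cP n * x ^ n)) :: complex) sums of_real (- Pf x)"
    by (intro sums_of_real sums_minus sums_cP r)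
  then have "f0 (of_real x) - of_real x = of_real (- Pf x)" using sf(1) unfolding t1 using sums_unique2 by blast
  then show "f0 (of_real x) = of_real (x - Pf x)" by (simp add: diff_eq_eq algebra_simps)
  have t2: "(\<lambda>n. if 3 \<le> n then of_nat n * a0 n * of_real x ^ n else 0) = (\<lambda>n. of_real (- (cQ n * x ^ n)))"
    by (auto simp: fun_eq_iff a0_def cP_def cQ_def power2_eq_square)
  have "(\<lambda>n. of_real (- (cQ n * x ^ n)) :: complex) sums of_real (- Qf x)"
    by (intro sums_of_real sums_minus sums_cQ r)
  then have "of_real x * deriv f0 (of_real x) - of_real x = of_real (- Qf x)"
    using sf(2) unfolding t2 using sums_unique2 by blast
  then show "of_real x * deriv f0 (of_real x) = of_real (x - Qf x)" by (simp add: diff_eq_eq algebra_simps)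
qed

lemma Pf_small:
  fixes x :: real assumes x: "0 < x" "x < 3/10"
  shows "Pf x < x"
proof -
  have p: "(2+2*x)*(1-x)^2 = 2 - 2*x - 2*(x*x) + 2*(x*x*x)"
    by (simp add: algebra_simps power2_eq_square)
  have "x*x < 3/10 * x" using x by (intro mult_strict_right_mono) auto
  moreover have "0 \<le> x*x*x" using x by simp
  ultimately have q: "1 < (2+2*x)*(1-x)^2" unfolding p using x by linarith
  have d: "0 < (1-x)^2" using x by simp
  have "x * 1 < x * ((2+2*x)*(1-x)^2)" using q x by (intro mult_strict_left_mono) auto
  then have "x / (1-x)^2 < x * (2+2*x)" using d by (simp add: divide_less_eq mult.assoc)
  then show ?thesis unfolding Pf_def by (simp add: algebra_simps power2_eq_square)
qed

lemma f0_sq: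
  fixes x :: real assumes x: "0 < x" "x < 3/10"
  shows "sq f0 (of_real x) = of_real ((x - Qf x) / (x - Pf x))" "x - Pf x > 0"
proof -
  show pos: "x - Pf x > 0" using Pf_small[OF x] by simp
  have x1: "0 < x" "x < 1" using x by auto
  show "sq f0 (of_real x) = of_real ((x - Qf x) / (x - Pf x))"
    using x1 f0_vals[OF x1] by (simp add: sq_def)
qed

lemma f0_bad:
  fixes x :: real assumes x: "0 < x" "x < 3/10" and al: "0 \<le> al" "al < 1" and h: "hp al x < 0"
  shows "(x - Qf x) / (x - Pf x) < al"
proof -
  define P where "P = Pf x"
  define Q where "Q = Qf x"
  define G where "G = Q - al * P - (1-al)*x"
  have id: "x * hp al x = - ((1-x)^3 * G)" unfolding G_def P_def Q_def by (rule hp_identity) (use x in simp)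
  have "x * hp al x < 0" using x h by (simp add: mult_pos_neg)
  then have "(1-x)^3 * G > 0" using id by linarith
  moreover have "(1-x)^3 > 0" using x by simp
  ultimately have G: "G > 0" by (simp add: zero_less_mult_iff)
  have pos: "x - P > 0" using f0_sq(2)[OF x] by (simp add: P_def)
  have e: "al * (x - P) - (x - Q) = G" unfolding G_def by (simp add: algebra_simps)
  have "x - Q < al * (x - P)" using e G by linarith
  then show ?thesis using pos by (simp add: P_def Q_def divide_less_eq)
qed

lemma hp_3_10: assumes "0 \<le> al" shows "hp al (3/10) < 0"
proof -
  have "hp al (3/10) = -(2024 + 1918*al)/10000" unfolding hp_def by (simp add: field_simps power3_eq_cube)
  then show ?thesis using assms by simp
qed

lemma root_small:
  assumes al: "0 \<le> al" "al < 1" and r: "0 < r" "r < 1" "hp al r = 0"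
  shows "r < 3/10"
proof (rule ccontr)
  assume "\<not> r < 3/10"
  then have "r = 3/10 \<or> 3/10 < r" by auto
  then have "hp al r \<le> hp al (3/10)"
  proof
    assume "3/10 < r" then show ?thesis using hp_dec[OF al, of "3/10" r] r by simp
  next
    assume "r = 3/10" then show ?thesis by (metis order_refl)
  qed
  then show False using hp_3_10[OF al(1)] r by simp
qed

lemma radius_eq:
  assumes al: "0 \<le> al" "al < 1" and r: "0 < r" "r < 1" "hp al r = 0"
  shows "radius_starlike_order al classF = r"
  unfolding radius_starlike_order_def
proof (rule cSup_eq_maximum)
  have good: "starlike_order_upto al f r" if f: "f \<in> classF" for f
    unfolding starlike_order_upto_def
  proof safe
    fix z :: complex assume z: "0 < norm z" "norm z < r" "f z = 0"
    have "hp al (norm z) > hp al r" using hp_dec[OF al, of "norm z" r] z r by simp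
    then show False using star_pos(1)[OF f al, of z] z r by simp
  next
    fix z :: complex assume z: "norm z < r"
    show "al < Re (sq f z)"
    proof (cases "z = 0")
      case True then show ?thesis using al by (simp add: sq_def)
    next
      case False
      have "hp al (norm z) > hp al r" using hp_dec[OF al, of "norm z" r] z r by simp
      then have "norm (sq f z - 1) < 1 - al" using star_pos(2)[OF f al, of z] z r False by simp
      then show ?thesis by (rule Re_gt_of_dist)
    qed
  qed
  then show "r \<in> {r. 0 < r \<and> r \<le> 1 \<and> (\<forall>f\<in>classF. starlike_order_upto al f r)}" using r by auto
next
  fix r' assume "r' \<in> {r. 0 < r \<and> r \<le> 1 \<and> (\<forall>f\<in>classF. starlike_order_upto al f r)}"
  then have r': "0 < r'" "\<forall>f\<in>classF. starlike_order_upto al f r'" by auto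
  show "r' \<le> r"
  proof (rule ccontr)
    assume "\<not> r' \<le> r"
    then have rr: "r < r'" by simp
    have r3: "r < 3/10" by (rule root_small[OF al r])
    define x where "x = (r + min r' (3/10)) / 2"
    have x: "r < x" "x < r'" "x < 3/10" "0 < x" using rr r3 r by (auto simp: x_def min_def)
    have "hp al x < hp al r" using hp_dec[OF al, of r x] x r by simp
    then have "(x - Qf x) / (x - Pf x) < al" using f0_bad[OF x(4) x(3) al] r by simp
    moreover have "al < Re (sq f0 (of_real x))"
      using r'(2) f0_class x unfolding starlike_order_upto_def by auto
    ultimately show False using f0_sq(1)[OF x(4) x(3)] by simp
  qed
qed

lemma parabolic_eq:
  assumes r: "0 < r" "r < 1" "hp (1/2) r = 0"
  shows "radius_parabolic classF = r"
  unfolding radius_parabolic_def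
proof (rule cSup_eq_maximum)
  have al: "0 \<le> (1/2::real)" "(1/2::real) < 1" by auto
  have "\<forall>f\<in>classF. \<forall>z. norm z < r \<longrightarrow> Re (sq f z) > norm (sq f z - 1)"
  proof safe
    fix f :: "complex \<Rightarrow> complex" and z :: complex assume f: "f \<in> classF" and z: "norm z < r"
    show "norm (sq f z - 1) < Re (sq f z)"
    proof (cases "z = 0")
      case True then show ?thesis by (simp add: sq_def)
    next
      case False
      have "hp (1/2) (norm z) > hp (1/2) r" using hp_dec[OF al, of "norm z" r] z r by simp
      then have n: "norm (sq f z - 1) < 1 - 1/2" using star_pos(2)[OF f al, of z] z r False by simp
      then have "Re (sq f z) > 1/2" by (rule Re_gt_of_dist)
      then show ?thesis using n by simp
    qed
  qed
  then show "r \<in> {r. 0 < r \<and> r \<le> 1 \<and> (\<forall>f\<in>classF. \<forall>z. norm z < r \<longrightarrow> Re (sq f z) > norm (sq f z - 1))}"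
    using r by auto
next
  have al: "0 \<le> (1/2::real)" "(1/2::real) < 1" by auto
  fix r' assume "r' \<in> {r. 0 < r \<and> r \<le> 1 \<and> (\<forall>f\<in>classF. \<forall>z. norm z < r \<longrightarrow> Re (sq f z) > norm (sq f z - 1))}"
  then have r': "0 < r'" "\<forall>f\<in>classF. \<forall>z. norm z < r' \<longrightarrow> Re (sq f z) > norm (sq f z - 1)" by auto
  show "r' \<le> r"
  proof (rule ccontr)
    assume "\<not> r' \<le> r"
    then have rr: "r < r'" by simp
    have r3: "r < 3/10" by (rule root_small[OF al r])
    define x where "x = (r + min r' (3/10)) / 2"
    have x: "r < x" "x < r'" "x < 3/10" "0 < x" using rr r3 r by (auto simp: x_def min_def)
    have "hp (1/2) x < hp (1/2) r" using hp_dec[OF al, of r x] x r by simp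
    then have w: "(x - Qf x) / (x - Pf x) < 1/2" using f0_bad[OF x(4) x(3) al] r by simp
    define w where "w = (x - Qf x) / (x - Pf x)"
    have "norm (sq f0 (of_real x) - 1) < Re (sq f0 (of_real x))"
      using r'(2) f0_class x by auto
    moreover have sqw: "sq f0 (of_real x) = of_real w" using f0_sq(1)[OF x(4) x(3)] unfolding w_def .
    moreover have "norm (of_real w - 1 :: complex) = \<bar>w - 1\<bar>"
      by (metis norm_of_real of_real_1 of_real_diff)
    ultimately have "\<bar>w - 1\<bar> < w" by simp
    then show False using w unfolding w_def by linarith
  qed
qed

theorem corollary2p3:
  shows "(\<forall>\<alpha>::real. 0 \<le> \<alpha> \<and> \<alpha> < 1 \<longrightarrow>
            (\<exists>!r. 0 < r \<and> r < 1 \<and>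
                  2 * (1 - \<alpha> + (2 - \<alpha>) * r) * (1 - r) ^ 3 = 1 - \<alpha> + (1 + \<alpha>) * r)
          \<and> (\<forall>r. 0 < r \<and> r < 1 \<and>
                  2 * (1 - \<alpha> + (2 - \<alpha>) * r) * (1 - r) ^ 3 = 1 - \<alpha> + (1 + \<alpha>) * r
               \<longrightarrow> radius_starlike_order \<alpha> classF = r))
       \<and> (\<exists>r0::real. 0 < r0 \<and> r0 < 1 \<and> 2 * (1 + 2 * r0) * (1 - r0) ^ 3 = 1 + r0
              \<and> \<bar>r0 - 0.253571\<bar> < 0.000001 \<and> radius_starlike classF = r0)
       \<and> radius_starlike_order (1/2) classF = 1 - root 3 (1/2)
       \<and> radius_parabolic classF = 1 - root 3 (1/2)"
proof -
  have eqv: "\<And>al r::real. (2 * (1 - al + (2 - al) * r) * (1 - r) ^ 3 = 1 - al + (1 + al) * r) \<longleftrightarrow> hp al r = 0"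
    by (simp add: hp_def)
  have ex: "\<exists>r. 0 < r \<and> r < 1 \<and> hp al r = 0" if al: "0 \<le> al" "al < 1" for al
  proof -
    have "hp al 1 \<le> 0" "0 \<le> hp al 0" using al by (simp_all add: hp_def)
    then obtain r where r: "0 \<le> r" "r \<le> 1" "hp al r = 0"
      using IVT2'[of "hp al" 1 0 0] hp_cont by auto
    have "r \<noteq> 0" using r al by (auto simp: hp_def)
    moreover have "r \<noteq> 1" using r by (auto simp: hp_def)
    ultimately have "0 < r" "r < 1" using r(1,2) by linarith+
    then show ?thesis using r(3) by blast
  qed
  have uniq: "r = s" if al: "0 \<le> al" "al < 1" and "0 < r" "r < 1" "0 < s" "s < 1" "hp al r = 0" "hp al s = 0"
    for al r s
  proof (rule ccontr)
    assume "r \<noteq> s"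
    then consider "r < s" | "s < r" by linarith
    then show False
    proof cases
      case 1 then show False using hp_dec[OF al, of r s] that by simp
    next
      case 2 then show False using hp_dec[OF al, of s r] that by simp
    qed
  qed
  have P1: "\<forall>\<alpha>::real. 0 \<le> \<alpha> \<and> \<alpha> < 1 \<longrightarrow>
            (\<exists>!r. 0 < r \<and> r < 1 \<and>
                  2 * (1 - \<alpha> + (2 - \<alpha>) * r) * (1 - r) ^ 3 = 1 - \<alpha> + (1 + \<alpha>) * r)
          \<and> (\<forall>r. 0 < r \<and> r < 1 \<and>
                  2 * (1 - \<alpha> + (2 - \<alpha>) * r) * (1 - r) ^ 3 = 1 - \<alpha> + (1 + \<alpha>) * r
               \<longrightarrow> radius_starlike_order \<alpha> classF = r)"
  proof (rule allI, rule impI)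
    fix al :: real assume al: "0 \<le> al \<and> al < 1"
    have A: "\<exists>!r. 0 < r \<and> r < 1 \<and> 2 * (1 - al + (2 - al) * r) * (1 - r) ^ 3 = 1 - al + (1 + al) * r"
      unfolding eqv using ex[of al] uniq[of al] al by blast
    have B: "\<forall>r. 0 < r \<and> r < 1 \<and> 2 * (1 - al + (2 - al) * r) * (1 - r) ^ 3 = 1 - al + (1 + al) * r
               \<longrightarrow> radius_starlike_order al classF = r"
      unfolding eqv using radius_eq al by blast
    show "(\<exists>!r. 0 < r \<and> r < 1 \<and> 2 * (1 - al + (2 - al) * r) * (1 - r) ^ 3 = 1 - al + (1 + al) * r) \<and>
      (\<forall>r. 0 < r \<and> r < 1 \<and> 2 * (1 - al + (2 - al) * r) * (1 - r) ^ 3 = 1 - al + (1 + al) * r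
               \<longrightarrow> radius_starlike_order al classF = r)" using A B by blast
  qed
  have P2: "\<exists>r0::real. 0 < r0 \<and> r0 < 1 \<and> 2 * (1 + 2 * r0) * (1 - r0) ^ 3 = 1 + r0
              \<and> \<bar>r0 - 0.253571\<bar> < 0.000001 \<and> radius_starlike classF = r0"
  proof -
    have "hp 0 (2535715/10^7) \<le> 0" "0 \<le> hp 0 (2535705/10^7)" by (simp_all add: hp_def power3_eq_cube)
    then obtain r0 where r0: "2535705/10^7 \<le> r0" "r0 \<le> 2535715/10^7" "hp 0 r0 = 0"
      using IVT2'[of "hp 0" "2535715/10^7" 0 "2535705/10^7"] hp_cont by auto
    have b: "0 < r0" "r0 < 1" using r0 by auto
    have E1: "2 * (1 + 2 * r0) * (1 - r0) ^ 3 = 1 + r0" using r0(3) eqv[of 0 r0] by simp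
    have l: "(2535705/10000000::real) \<le> r0" "r0 \<le> (2535715/10000000::real)" using r0(1,2) by simp_all
    have dd: "(0.253571::real) = 253571/1000000" "(0.000001::real) = 1/1000000" by simp_all
    have E2: "\<bar>r0 - 0.253571\<bar> < 0.000001" using l unfolding abs_less_iff dd by linarith
    have E3: "radius_starlike classF = r0"
      unfolding radius_starlike_def by (rule radius_eq) (use b r0 in auto)
    show ?thesis using b E1 E2 E3 by blast
  qed
  define t where "t = root 3 (1/2::real)"
  have t: "0 < t" "t < 1" "t ^ 3 = 1/2" unfolding t_def by (auto intro: real_root_gt_zero)
  have "hp (1/2) (1 - t) = (1/2 + 3/2*(1-t)) * (2*t^3 - 1)" unfolding hp_def by (simp add: field_simps power3_eq_cube)
  then have h12: "hp (1/2) (1 - t) = 0" using t(3) by simp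
  have rt: "0 < 1 - t" "1 - t < 1" using t by auto
  have P3: "radius_starlike_order (1/2) classF = 1 - root 3 (1/2)"
    unfolding t_def[symmetric] by (rule radius_eq) (use rt h12 in auto)
  have P4: "radius_parabolic classF = 1 - root 3 (1/2)"
    unfolding t_def[symmetric] by (rule parabolic_eq) (use rt h12 in auto)
  show ?thesis using P1 P2 P3 P4 by blast
qed

end
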